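(* Let $n\ge 2$, $d\ge n+1$, and let $f$ be a Perazzo form of degree $d$ in $S$. If $A_f$ has the weak Lefschetz property, then $d\ge 2n$.
   Context: $K$ is an algebraically closed field of characteristic zero. $S=K[x_0,\dots,x_n,u,v]$ and $R=K[y_0,\dots,y_n,U,V]$ acts on $S$ by differentiation ($y_i=\partial/\partial x_i$, $U=\partial/\partial u$, $V=\partial/\partial v$). A Perazzo form of degree $d$ is $f=x_0p_0+x_1p_1+\cdots+x_np_n+g$ where $p_0,\dots,p_n\in K[u,v]_{d-1}$ are linearly independent but algebraically dependent forms and $g\in K[u,v]_d$. $\operatorname{Ann}_R(f)=\{\theta\in R:\theta\circ f=0\}$ and $A_f=R/\operatorname{Ann}_R(f)$ is a graded artinian Gorenstein algebra of socle degree $d$. A graded artinian algebra $A$ has the weak Lefschetz property (WLP) if there is $\ell\in[A]_1$ such that multiplication $\times\ell:[A]_i\to[A]_{i+1}$ has maximal rank (is injective or surjective) for every $i\ge 0$. *)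

theory Defs
  imports "HOL-Library.Poly_Mapping" "HOL-Computational_Algebra.Polynomial"
begin

type_synonym 'a mpoly = "(nat \<Rightarrow>\<^sub>0 nat) \<Rightarrow>\<^sub>0 'a"

definition alg_closed_field :: "'a::field itself \<Rightarrow> bool" where
  "alg_closed_field _ \<longleftrightarrow> (\<forall>p :: 'a poly. degree p \<ge> 1 \<longrightarrow> (\<exists>x. poly p x = 0))"

definition mconst :: "'a::comm_ring_1 \<Rightarrow> 'a mpoly" where
  "mconst c = Poly_Mapping.single 0 c"

definition mvar :: "nat \<Rightarrow> 'a::comm_ring_1 mpoly" where
  "mvar j = Poly_Mapping.single (Poly_Mapping.single j 1) 1"

definition mon_deg :: "(nat \<Rightarrow>\<^sub>0 nat) \<Rightarrow> nat" where
  "mon_deg \<alpha> = (\<Sum>j\<in>Poly_Mapping.keys \<alpha>. Poly_Mapping.lookup \<alpha> j)"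

definition form_in :: "nat set \<Rightarrow> nat \<Rightarrow> 'a::comm_ring_1 mpoly \<Rightarrow> bool" where
  "form_in V d p \<longleftrightarrow> (\<forall>\<alpha>\<in>Poly_Mapping.keys p. mon_deg \<alpha> = d \<and> Poly_Mapping.keys \<alpha> \<subseteq> V)"

definition poly_in :: "nat set \<Rightarrow> 'a::comm_ring_1 mpoly \<Rightarrow> bool" where
  "poly_in V p \<longleftrightarrow> (\<forall>\<alpha>\<in>Poly_Mapping.keys p. Poly_Mapping.keys \<alpha> \<subseteq> V)"

definition msubst :: "'a::comm_ring_1 mpoly \<Rightarrow> (nat \<Rightarrow> 'a mpoly) \<Rightarrow> 'a mpoly" where
  "msubst F P = (\<Sum>\<alpha>\<in>Poly_Mapping.keys F. mconst (Poly_Mapping.lookup F \<alpha>) * (\<Prod>j\<in>Poly_Mapping.keys \<alpha>. P j ^ Poly_Mapping.lookup \<alpha> j))"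

text \<open>Action of the ring of differential operators by differentiation:
  the variable j of theta acts as partial derivative w.r.t. variable j of f, so
  y^alpha o x^beta = beta!/(beta-alpha)! x^(beta-alpha) if alpha <= beta, and 0 otherwise.\<close>
definition diff_act :: "'a::field_char_0 mpoly \<Rightarrow> 'a mpoly \<Rightarrow> 'a mpoly" (infixr \<open>\<circ>\<^sub>D\<close> 70) where
  "\<theta> \<circ>\<^sub>D f = (\<Sum>\<alpha>\<in>Poly_Mapping.keys \<theta>. \<Sum>\<beta>\<in>{\<beta>\<in>Poly_Mapping.keys f. \<forall>j. Poly_Mapping.lookup \<alpha> j \<le> Poly_Mapping.lookup \<beta> j}.
      Poly_Mapping.single (\<beta> - \<alpha>)
        (Poly_Mapping.lookup \<theta> \<alpha> * Poly_Mapping.lookup f \<beta> *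
          (\<Prod>j\<in>Poly_Mapping.keys \<beta>. of_nat (fact (Poly_Mapping.lookup \<beta> j)) / of_nat (fact (Poly_Mapping.lookup \<beta> j - Poly_Mapping.lookup \<alpha> j)))))"

text \<open>Variables: x_0..x_n are 0..n, u is n+1, v is n+2 (same indexing for y_i, U, V in R).\<close>
definition all_vars :: "nat \<Rightarrow> nat set" where
  "all_vars n = {..n+2}"

definition uv_vars :: "nat \<Rightarrow> nat set" where
  "uv_vars n = {n+1, n+2}"

definition Ann :: "nat \<Rightarrow> 'a::field_char_0 mpoly \<Rightarrow> 'a mpoly set" where
  "Ann n f = {\<theta>. poly_in (all_vars n) \<theta> \<and> \<theta> \<circ>\<^sub>D f = 0}"

definition perazzo_form :: "nat \<Rightarrow> nat \<Rightarrow> 'a::field_char_0 mpoly \<Rightarrow> bool" where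
  "perazzo_form n d f \<longleftrightarrow>
    (\<exists>P :: nat \<Rightarrow> 'a mpoly. \<exists>g.
       (\<forall>i\<le>n. form_in (uv_vars n) (d - 1) (P i)) \<and>
       form_in (uv_vars n) d g \<and>
       \<comment> \<open>linearly independent\<close>
       (\<forall>c :: nat \<Rightarrow> 'a. (\<Sum>i\<le>n. mconst (c i) * P i) = 0 \<longrightarrow> (\<forall>i\<le>n. c i = 0)) \<and>
       \<comment> \<open>algebraically dependent\<close>
       (\<exists>F :: 'a mpoly. F \<noteq> 0 \<and> poly_in {..n} F \<and> msubst F P = 0) \<and>
       f = (\<Sum>i\<le>n. mvar i * P i) + g)"

text \<open>Multiplication by ell : [A_f]_i -> [A_f]_(i+1) has maximal rank, where
  [A_f]_i = R_i / (Ann f)_i.\<close>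
definition mult_injective :: "nat \<Rightarrow> 'a::field_char_0 mpoly \<Rightarrow> 'a mpoly \<Rightarrow> nat \<Rightarrow> bool" where
  "mult_injective n f l i \<longleftrightarrow>
     (\<forall>\<theta>. form_in (all_vars n) i \<theta> \<longrightarrow> l * \<theta> \<in> Ann n f \<longrightarrow> \<theta> \<in> Ann n f)"

definition mult_surjective :: "nat \<Rightarrow> 'a::field_char_0 mpoly \<Rightarrow> 'a mpoly \<Rightarrow> nat \<Rightarrow> bool" where
  "mult_surjective n f l i \<longleftrightarrow>
     (\<forall>\<psi>. form_in (all_vars n) (i+1) \<psi> \<longrightarrow>
        (\<exists>\<theta>. form_in (all_vars n) i \<theta> \<and> \<psi> - l * \<theta> \<in> Ann n f))"

text \<open>Weak Lefschetz property of A_f = R/Ann_R(f); a linear element of A_f is the class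
  of a linear form ell of R.\<close>
definition has_WLP :: "nat \<Rightarrow> 'a::field_char_0 mpoly \<Rightarrow> bool" where
  "has_WLP n f \<longleftrightarrow>
     (\<exists>l. form_in (all_vars n) 1 l \<and>
        (\<forall>i. mult_injective n f l i \<or> mult_surjective n f l i))"

end

theory Submission
  imports Defs
begin

lemma lookup_mconst_mult: "Poly_Mapping.lookup (mconst c * p) g = c * Poly_Mapping.lookup p g"
  by (simp add: mconst_def flip: mult_map_scale_conv_mult) (simp add: map.rep_eq when_def)

definition rr :: "(nat \<Rightarrow>\<^sub>0 nat) \<Rightarrow> (nat \<Rightarrow>\<^sub>0 nat) \<Rightarrow> 'a::field_char_0" where
  "rr g a = (\<Prod>j\<in>Poly_Mapping.keys (g+a). of_nat (fact (Poly_Mapping.lookup (g+a) j)) / of_nat (fact (Poly_Mapping.lookup g j)))"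

lemma minus_eq_iff_add: 
  fixes a b g :: "nat \<Rightarrow>\<^sub>0 nat"
  assumes "\<forall>j. Poly_Mapping.lookup a j \<le> Poly_Mapping.lookup b j"
  shows "b - a = g \<longleftrightarrow> b = g + a"
  using assms by (auto simp: poly_mapping_eq_iff fun_eq_iff lookup_minus lookup_add) (metis le_add_diff_inverse2)

lemma diff_act_lookup:
  "Poly_Mapping.lookup (\<theta> \<circ>\<^sub>D f) g = (\<Sum>a\<in>Poly_Mapping.keys \<theta>. Poly_Mapping.lookup \<theta> a * Poly_Mapping.lookup f (g+a) * rr g a)"
proof -
  have inner: "(\<Sum>b\<in>{b\<in>Poly_Mapping.keys f. \<forall>j. Poly_Mapping.lookup a j \<le> Poly_Mapping.lookup b j}.
      Poly_Mapping.lookup (Poly_Mapping.single (b - a)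
        (Poly_Mapping.lookup \<theta> a * Poly_Mapping.lookup f b *
          (\<Prod>j\<in>Poly_Mapping.keys b. of_nat (fact (Poly_Mapping.lookup b j)) / of_nat (fact (Poly_Mapping.lookup b j - Poly_Mapping.lookup a j))))) g)
     = Poly_Mapping.lookup \<theta> a * Poly_Mapping.lookup f (g+a) * rr g a" for a
  proof -
    let ?S = "{b\<in>Poly_Mapping.keys f. \<forall>j. Poly_Mapping.lookup a j \<le> Poly_Mapping.lookup b j}"
    let ?X = "\<lambda>b. Poly_Mapping.lookup \<theta> a * Poly_Mapping.lookup f b *
          (\<Prod>j\<in>Poly_Mapping.keys b. of_nat (fact (Poly_Mapping.lookup b j)) / of_nat (fact (Poly_Mapping.lookup b j - Poly_Mapping.lookup a j))) :: 'a"
    have "(\<Sum>b\<in>?S. Poly_Mapping.lookup (Poly_Mapping.single (b - a) (?X b)) g)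
        = (\<Sum>b\<in>?S. if b = g + a then ?X b else 0)"
      by (rule sum.cong) (auto simp: lookup_single when_def minus_eq_iff_add)
    also have "\<dots> = (if g + a \<in> ?S then ?X (g+a) else 0)"
      by (subst sum.delta) auto
    also have "\<dots> = Poly_Mapping.lookup \<theta> a * Poly_Mapping.lookup f (g+a) * rr g a"
      by (auto simp: rr_def lookup_add in_keys_iff)
    finally show ?thesis .
  qed
  show ?thesis unfolding diff_act_def lookup_sum inner ..
qed

lemma diff_act_lookup':
  assumes "finite S" "Poly_Mapping.keys \<theta> \<subseteq> S"
  shows "Poly_Mapping.lookup (\<theta> \<circ>\<^sub>D f) g = (\<Sum>a\<in>S. Poly_Mapping.lookup \<theta> a * Poly_Mapping.lookup f (g+a) * rr g a)"
  unfolding diff_act_lookup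
  by (rule sum.mono_neutral_left) (use assms in \<open>auto simp: in_keys_iff\<close>)

lemma keys_mconst_mult: "Poly_Mapping.keys (mconst c * p) \<subseteq> Poly_Mapping.keys p"
  by (auto simp: in_keys_iff lookup_mconst_mult)

lemma lookup_mconst: "Poly_Mapping.lookup (mconst c) g = (if g = 0 then c else 0)"
  by (simp add: mconst_def lookup_single when_def)

lemma diff_zero_left [simp]: "0 \<circ>\<^sub>D f = 0"
  by (simp add: diff_act_def)

lemma diff_zero_right [simp]: "\<theta> \<circ>\<^sub>D 0 = 0"
  by (simp add: diff_act_def)

lemma diff_add_left: "(a + b) \<circ>\<^sub>D f = a \<circ>\<^sub>D f + b \<circ>\<^sub>D f"
proof (rule poly_mapping_eqI)
  fix g
  let ?S = "Poly_Mapping.keys a \<union> Poly_Mapping.keys b"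
  have k: "Poly_Mapping.keys (a+b) \<subseteq> ?S" by (rule keys_add)
  show "Poly_Mapping.lookup ((a + b) \<circ>\<^sub>D f) g = Poly_Mapping.lookup (a \<circ>\<^sub>D f + b \<circ>\<^sub>D f) g"
    by (simp add: lookup_add diff_act_lookup'[OF _ k] diff_act_lookup'[of ?S a]
         diff_act_lookup'[of ?S b] sum.distrib algebra_simps)
qed

lemma diff_minus_left: "(a - b) \<circ>\<^sub>D f = a \<circ>\<^sub>D f - b \<circ>\<^sub>D f"
proof (rule poly_mapping_eqI)
  fix g
  let ?S = "Poly_Mapping.keys a \<union> Poly_Mapping.keys b"
  have k: "Poly_Mapping.keys (a-b) \<subseteq> ?S" by (auto simp: in_keys_iff lookup_minus)
  show "Poly_Mapping.lookup ((a - b) \<circ>\<^sub>D f) g = Poly_Mapping.lookup (a \<circ>\<^sub>D f - b \<circ>\<^sub>D f) g"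
    by (simp add: lookup_minus diff_act_lookup'[OF _ k] diff_act_lookup'[of ?S a]
         diff_act_lookup'[of ?S b] sum_subtractf algebra_simps)
qed

lemma diff_smult_left: "(mconst c * a) \<circ>\<^sub>D f = mconst c * (a \<circ>\<^sub>D f)"
proof (rule poly_mapping_eqI)
  fix g
  show "Poly_Mapping.lookup ((mconst c * a) \<circ>\<^sub>D f) g = Poly_Mapping.lookup (mconst c * (a \<circ>\<^sub>D f)) g"
    unfolding diff_act_lookup'[OF finite_keys keys_mconst_mult]
    unfolding lookup_mconst_mult diff_act_lookup
    by (simp add: sum_distrib_left mult_ac)
qed

lemma diff_add_right: "a \<circ>\<^sub>D (f + h) = a \<circ>\<^sub>D f + a \<circ>\<^sub>D h"
  by (rule poly_mapping_eqI) (simp add: lookup_add diff_act_lookup sum.distrib algebra_simps)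

lemma diff_minus_right: "a \<circ>\<^sub>D (f - h) = a \<circ>\<^sub>D f - a \<circ>\<^sub>D h"
  by (rule poly_mapping_eqI) (simp add: lookup_minus diff_act_lookup sum_subtractf algebra_simps)

lemma diff_smult_right: "a \<circ>\<^sub>D (mconst c * f) = mconst c * (a \<circ>\<^sub>D f)"
  by (rule poly_mapping_eqI) (unfold diff_act_lookup lookup_mconst_mult, simp add: sum_distrib_left mult_ac)

lemma diff_sum_left: "(\<Sum>i\<in>I. a i) \<circ>\<^sub>D f = (\<Sum>i\<in>I. a i \<circ>\<^sub>D f)"
  by (induction I rule: infinite_finite_induct) (auto simp: diff_add_left)

lemma diff_sum_right: "a \<circ>\<^sub>D (\<Sum>i\<in>I. f i) = (\<Sum>i\<in>I. a \<circ>\<^sub>D f i)"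
  by (induction I rule: infinite_finite_induct) (auto simp: diff_add_right)

lemma rr_superset:
  assumes "finite T" "Poly_Mapping.keys (g+a) \<subseteq> T"
  shows "rr g a = (\<Prod>j\<in>T. of_nat (fact (Poly_Mapping.lookup (g+a) j)) / of_nat (fact (Poly_Mapping.lookup g j)))"
  unfolding rr_def
  by (rule prod.mono_neutral_left) (use assms in \<open>auto simp: in_keys_iff lookup_add\<close>)

lemma rr_mult: "rr (g+k) k' * rr g k = (rr g (k+k') :: 'a::field_char_0)"
proof -
  let ?T = "Poly_Mapping.keys (g+k+k')"
  have s1: "Poly_Mapping.keys (g+k) \<subseteq> ?T" and s2: "Poly_Mapping.keys (g+k+k') \<subseteq> ?T"
    and s3: "Poly_Mapping.keys (g+(k+k')) \<subseteq> ?T"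
    by (auto simp: in_keys_iff lookup_add add.assoc)
  have e1: "rr (g+k) k' = (\<Prod>j\<in>?T. of_nat (fact (Poly_Mapping.lookup (g+k+k') j)) / of_nat (fact (Poly_Mapping.lookup (g+k) j)) :: 'a)"
    by (rule rr_superset) (use s2 in auto)
  have e2: "rr g k = (\<Prod>j\<in>?T. of_nat (fact (Poly_Mapping.lookup (g+k) j)) / of_nat (fact (Poly_Mapping.lookup g j)) :: 'a)"
    by (rule rr_superset) (use s1 in auto)
  have e3: "rr g (k+k') = (\<Prod>j\<in>?T. of_nat (fact (Poly_Mapping.lookup (g+k+k') j)) / of_nat (fact (Poly_Mapping.lookup g j)) :: 'a)"
    using rr_superset[OF finite_keys s3] by (simp add: add.assoc)
  show ?thesis
    unfolding e1 e2 e3 prod.distrib[symmetric]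
    by (rule prod.cong) auto
qed

lemma update_eq_add: "a \<notin> Poly_Mapping.keys f \<Longrightarrow> Poly_Mapping.update a b f = f + Poly_Mapping.single a b"
  by (rule poly_mapping_eqI) (auto simp: lookup_update lookup_add lookup_single in_keys_iff when_def)

lemma single_diff_lookup:
  "Poly_Mapping.lookup (Poly_Mapping.single k c \<circ>\<^sub>D f) g = c * Poly_Mapping.lookup f (g+k) * rr g k"
  by (subst diff_act_lookup'[of "{k}"]) (auto simp: lookup_single)

lemma diff_assoc_single:
  "(Poly_Mapping.single k c * Poly_Mapping.single k' e) \<circ>\<^sub>D f
     = Poly_Mapping.single k c \<circ>\<^sub>D (Poly_Mapping.single k' e \<circ>\<^sub>D f)"
proof (rule poly_mapping_eqI)
  fix g
  show "Poly_Mapping.lookup ((Poly_Mapping.single k c * Poly_Mapping.single k' e) \<circ>\<^sub>D f) g =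
        Poly_Mapping.lookup (Poly_Mapping.single k c \<circ>\<^sub>D (Poly_Mapping.single k' e \<circ>\<^sub>D f)) g"
    unfolding mult_single single_diff_lookup rr_mult[symmetric]
    by (simp add: add.assoc add.commute[of k k'] mult_ac)
qed

lemma diff_assoc: "(a * b) \<circ>\<^sub>D f = a \<circ>\<^sub>D (b \<circ>\<^sub>D f)"
proof (induction a rule: update_induct)
  case const
  then show ?case by simp
next
  case (update a k c)
  have sb: "(Poly_Mapping.single k c * b) \<circ>\<^sub>D f = Poly_Mapping.single k c \<circ>\<^sub>D (b \<circ>\<^sub>D f)"
  proof (induction b rule: update_induct)
    case const
    then show ?case by simp
  next
    case (update b k' e)
    then show ?case
      by (simp add: update_eq_add distrib_left diff_add_left diff_add_right diff_assoc_single)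
  qed
  from update show ?case
    by (simp add: update_eq_add distrib_right diff_add_left sb)
qed

abbreviation "lk \<equiv> Poly_Mapping.lookup"
abbreviation "ks \<equiv> Poly_Mapping.keys"
abbreviation "sg \<equiv> Poly_Mapping.single"

lemma mon_deg_superset: "finite S \<Longrightarrow> ks a \<subseteq> S \<Longrightarrow> mon_deg a = (\<Sum>j\<in>S. lk a j)"
  unfolding mon_deg_def by (rule sum.mono_neutral_left) (auto simp: in_keys_iff)

lemma mon_deg_add: "mon_deg (a + b) = mon_deg a + mon_deg b"
proof -
  let ?S = "ks a \<union> ks b"
  have "ks (a+b) \<subseteq> ?S" by (rule keys_add)
  then show ?thesis
    using mon_deg_superset[of ?S a] mon_deg_superset[of ?S b] mon_deg_superset[of ?S "a+b"]
    by (simp add: lookup_add sum.distrib)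
qed

lemma mon_deg_single: "mon_deg (sg j k) = k"
  by (simp add: mon_deg_def)

lemma mon_deg_zero [simp]: "mon_deg 0 = 0"
  by (simp add: mon_deg_def)

lemma keys_add_nat: "ks ((a::nat \<Rightarrow>\<^sub>0 nat) + b) = ks a \<union> ks b"
  by (auto simp: in_keys_iff lookup_add)

lemma form_in_zero [simp]: "form_in V d 0"
  by (simp add: form_in_def)

lemma form_in_add: "form_in V d p \<Longrightarrow> form_in V d q \<Longrightarrow> form_in V d (p + q)"
  unfolding form_in_def using keys_add[of p q] by auto

lemma form_in_minus: "form_in V d (p - q)" if "form_in V d p" "form_in V d q"
proof -
  have "ks (p - q) \<subseteq> ks p \<union> ks q" by (auto simp: in_keys_iff lookup_minus)
  then show ?thesis using that unfolding form_in_def by blast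
qed

lemma form_in_smult: "form_in V d p \<Longrightarrow> form_in V d (mconst c * p)"
  unfolding form_in_def using keys_mconst_mult[of c p] by auto

lemma form_in_sum: "(\<And>i. i \<in> I \<Longrightarrow> form_in V d (p i)) \<Longrightarrow> form_in V d (\<Sum>i\<in>I. p i)"
  by (induction I rule: infinite_finite_induct) (auto intro: form_in_add)

lemma form_in_mono: "form_in V d p \<Longrightarrow> V \<subseteq> W \<Longrightarrow> form_in W d p"
  unfolding form_in_def by blast

lemma form_in_single: "mon_deg a = d \<Longrightarrow> ks a \<subseteq> V \<Longrightarrow> form_in V d (sg a c)"
  unfolding form_in_def by auto

lemma form_in_mult:
  assumes "form_in A a p" "form_in B b q"
  shows "form_in (A \<union> B) (a + b) (p * q)"
  unfolding form_in_def
proof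
  fix g assume "g \<in> ks (p * q)"
  then obtain x y where "g = x + y" "x \<in> ks p" "y \<in> ks q"
    using keys_mult by blast
  with assms show "mon_deg g = a + b \<and> ks g \<subseteq> A \<union> B"
    unfolding form_in_def by (auto simp: mon_deg_add keys_add_nat)
qed

lemma form_in_poly_in: "form_in V d p \<Longrightarrow> poly_in V p"
  unfolding form_in_def poly_in_def by blast

lemma poly_in_mult:
  assumes "poly_in A p" "poly_in A q"
  shows "poly_in A (p * q)"
  unfolding poly_in_def
proof
  fix g assume "g \<in> ks (p * q)"
  then obtain x y where "g = x + y" "x \<in> ks p" "y \<in> ks q"
    using keys_mult by blast
  with assms show "ks g \<subseteq> A"
    unfolding poly_in_def by (auto simp: keys_add_nat)
qed

lemma diff_keys:
  assumes "g \<in> ks (\<theta> \<circ>\<^sub>D f)"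
  shows "\<exists>a\<in>ks \<theta>. g + a \<in> ks f"
proof (rule ccontr)
  assume "\<not> ?thesis"
  then have "lk (\<theta> \<circ>\<^sub>D f) g = 0"
    unfolding diff_act_lookup by (auto simp: in_keys_iff intro!: sum.neutral)
  with assms show False by (simp add: in_keys_iff)
qed

lemma form_in_diff:
  assumes "form_in A a \<theta>" "form_in V b f"
  shows "form_in V (b - a) (\<theta> \<circ>\<^sub>D f)"
  unfolding form_in_def
proof
  fix g assume "g \<in> ks (\<theta> \<circ>\<^sub>D f)"
  then obtain x where x: "x \<in> ks \<theta>" "g + x \<in> ks f" using diff_keys by blast
  have "mon_deg (g + x) = b" "ks (g + x) \<subseteq> V" "mon_deg x = a"
    using assms x unfolding form_in_def by auto
  then show "mon_deg g = b - a \<and> ks g \<subseteq> V"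
    by (auto simp: mon_deg_add keys_add_nat)
qed

definition bm :: "nat \<Rightarrow> nat \<Rightarrow> nat \<Rightarrow> nat \<Rightarrow> (nat \<Rightarrow>\<^sub>0 nat)" where
  "bm u v m s = sg u s + sg v (m - s)"

lemma lookup_bm: "u \<noteq> v \<Longrightarrow> lk (bm u v m s) j = (if j = u then s else if j = v then m - s else 0)"
  by (auto simp: bm_def lookup_add lookup_single)

lemma bm_inj: "u \<noteq> v \<Longrightarrow> bm u v m s = bm u v m s' \<Longrightarrow> s = s'"
  by (metis lookup_bm)

lemma mon_deg_bm: "s \<le> m \<Longrightarrow> mon_deg (bm u v m s) = m"
  by (simp add: bm_def mon_deg_add mon_deg_single)

lemma keys_bm: "ks (bm u v m s) \<subseteq> {u,v}"
  by (auto simp: bm_def keys_add_nat split: if_splits)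

lemma form_key_bm:
  assumes uv: "u \<noteq> v" and f: "form_in {u,v} m p" and g: "g \<in> ks p"
  shows "\<exists>s\<le>m. g = bm u v m s"
proof -
  have kg: "ks g \<subseteq> {u,v}" and dg: "mon_deg g = m" using f g unfolding form_in_def by auto
  have "mon_deg g = (\<Sum>j\<in>{u,v}. lk g j)" by (rule mon_deg_superset) (use kg in auto)
  with uv dg have m: "m = lk g u + lk g v" by simp
  have "g = bm u v m (lk g u)"
  proof (rule poly_mapping_eqI)
    fix j show "lk g j = lk (bm u v m (lk g u)) j"
      using kg m uv by (auto simp: lookup_bm in_keys_iff)
  qed
  then show ?thesis using m by (intro exI[of _ "lk g u"]) auto
qed

lemma form_zero_iff:
  assumes uv: "u \<noteq> v" and f: "form_in {u,v} m p" and z: "\<forall>s\<le>m. lk p (bm u v m s) = 0"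
  shows "p = 0"
proof (rule poly_mapping_eqI)
  fix g show "lk p g = lk 0 g"
  proof (cases "g \<in> ks p")
    case True
    then obtain s where "s \<le> m" "g = bm u v m s" using form_key_bm[OF uv f] by blast
    with z True show ?thesis by (simp add: in_keys_iff)
  next
    case False then show ?thesis by (simp add: in_keys_iff)
  qed
qed

definition low :: "nat \<Rightarrow> nat \<Rightarrow> nat \<Rightarrow> 'a::zero mpoly \<Rightarrow> nat" where
  "low u v m p = (LEAST s. lk p (bm u v m s) \<noteq> 0)"

lemma low_props:
  assumes uv: "u \<noteq> v" and f: "form_in {u,v} m p" and nz: "p \<noteq> 0"
  shows "lk p (bm u v m (low u v m p)) \<noteq> 0 \<and> low u v m p \<le> m \<and> (\<forall>s < low u v m p. lk p (bm u v m s) = 0)"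
proof -
  obtain s where s: "s \<le> m" "lk p (bm u v m s) \<noteq> 0"
    using form_zero_iff[OF uv f] nz by blast
  have a: "lk p (bm u v m (LEAST s. lk p (bm u v m s) \<noteq> 0)) \<noteq> 0" using s(2) by (rule LeastI)
  have b: "(LEAST s. lk p (bm u v m s) \<noteq> 0) \<le> s" using s(2) by (rule Least_le)
  show ?thesis unfolding low_def
    using a b s(1) by (auto dest: not_less_Least)
qed

lemma low_eqI: "lk p (bm u v m l) \<noteq> 0 \<Longrightarrow> (\<forall>s<l. lk p (bm u v m s) = 0) \<Longrightarrow> low u v m p = l"
  unfolding low_def by (rule Least_equality) (auto simp: not_less[symmetric])

interpretation mv: vector_space "\<lambda>c (p::'a::field_char_0 mpoly). mconst c * p"
  by unfold_locales (simp_all add: mconst_def algebra_simps single_add mult_single flip: mult.assoc)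

lemma reduce_span:
  fixes V X :: "'a::field_char_0 mpoly set"
  assumes uv: "u \<noteq> v"
    and Vf: "\<forall>x\<in>V. form_in {u,v} m x"
    and Vc: "\<forall>x\<in>V. \<forall>y\<in>X. \<forall>c. x - mconst c * y \<in> V"
    and Xl: "\<forall>x\<in>V. x \<noteq> 0 \<longrightarrow> (\<exists>y\<in>X. y \<noteq> 0 \<and> form_in {u,v} m y \<and> low u v m y = low u v m x)"
  shows "V \<subseteq> mv.span X"
proof -
  have main: "\<forall>x\<in>V. x \<noteq> 0 \<longrightarrow> m + 1 - low u v m x = N \<longrightarrow> x \<in> mv.span X" for N
  proof (induction N rule: less_induct)
    case (less N)
    show ?case
    proof (intro ballI impI)
      fix x assume x: "x \<in> V" "x \<noteq> 0" "m + 1 - low u v m x = N"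
      obtain y where y: "y \<in> X" "y \<noteq> 0" "form_in {u,v} m y" "low u v m y = low u v m x"
        using Xl x by blast
      define l where "l = low u v m x"
      define c where "c = lk x (bm u v m l) / lk y (bm u v m l)"
      define x' where "x' = x - mconst c * y"
      have x'V: "x' \<in> V" using Vc x y unfolding x'_def by blast
      have fx: "form_in {u,v} m x" using Vf x by blast
      note lx = low_props[OF uv fx x(2)] and ly = low_props[OF uv y(3) y(2)]
      have cy: "x = x' + mconst c * y" by (simp add: x'_def)
      have yX: "mconst c * y \<in> mv.span X" using mv.span_base[OF y(1)] mv.span_scale by blast
      show "x \<in> mv.span X"
      proof (cases "x' = 0")
        case True then show ?thesis using cy yX by simp
      next
        case False
        have fx': "form_in {u,v} m x'" using Vf x'V by blast
        have lkx': "lk x' g = lk x g - c * lk y g" for g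
          by (simp add: x'_def lookup_minus lookup_mconst_mult)
        have z: "\<forall>s\<le>l. lk x' (bm u v m s) = 0"
        proof (intro allI impI)
          fix s assume "s \<le> l"
          then consider "s < l" | "s = l" by linarith
          then show "lk x' (bm u v m s) = 0"
          proof cases
            case 1 then show ?thesis using lx ly y(4) by (simp add: lkx' l_def)
          next
            case 2 then show ?thesis using ly y(4) by (simp add: lkx' c_def l_def)
          qed
        qed
        note lx' = low_props[OF uv fx' False]
        have "low u v m x' > l"
        proof (rule ccontr)
          assume "\<not> ?thesis"
          then show False using z lx' by auto
        qed
        then have "m + 1 - low u v m x' < N" using lx' lx x(3) l_def by linarith
        with less.IH x'V False have "x' \<in> mv.span X" by blast
        then show ?thesis using cy yX mv.span_add by simp
      qed
    qed
  qed
  show ?thesis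
  proof
    fix x assume "x \<in> V"
    then show "x \<in> mv.span X" using main mv.span_zero by (cases "x = 0") auto
  qed
qed

lemma rr_nonzero: "(rr g a :: 'a::field_char_0) \<noteq> 0"
  unfolding rr_def by (auto simp: prod_zero_iff)

lemma mconst_diff: "mconst (a - b) = mconst a - mconst b"
  by (simp add: mconst_def single_diff)

lemma mconst_mult: "mconst (a * b) = mconst a * mconst b"
  by (simp add: mconst_def mult_single)

lemma mconst_0 [simp]: "mconst 0 = 0" by (simp add: mconst_def)
lemma mconst_1 [simp]: "mconst 1 = 1" by (simp add: mconst_def)

lemma bm_add:
  assumes uv: "u \<noteq> v" and "s \<le> m" "a \<le> k"
  shows "bm u v m s + bm u v k a = bm u v (m + k) (s + a)"
  by (rule poly_mapping_eqI) (use assms in \<open>auto simp: lookup_add lookup_bm\<close>)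

lemma form_bm: "s \<le> m \<Longrightarrow> form_in {u,v} m (sg (bm u v m s) c)"
  by (rule form_in_single) (auto simp: mon_deg_bm keys_bm)

lemma window_surj:
  fixes P :: "nat \<Rightarrow> 'a::field_char_0 mpoly"
  assumes uv: "u \<noteq> v"
    and Pf: "\<forall>i\<le>n. form_in {u,v} (d-1) (P i)"
    and indep: "\<forall>c. (\<Sum>i\<le>n. mconst (c i) * P i) = 0 \<longrightarrow> (\<forall>i\<le>n. c i = 0)"
    and j1: "1 \<le> j" and jd: "j < d" and jn: "d \<le> n + j"
  shows "\<forall>t. form_in {u,v} (d-j) t \<longrightarrow>
           t \<in> mv.span {sg (bm u v (j-1) a) 1 \<circ>\<^sub>D P i | a i. a \<le> j-1 \<and> i \<le> n}"
proof -
  define G where "G = {sg (bm u v (j-1) a) 1 \<circ>\<^sub>D P i | a i. a \<le> j-1 \<and> i \<le> n}"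
  define V where "V = range (\<lambda>c. \<Sum>i\<le>n. mconst (c i) * P i)"
  have Vf: "\<forall>x\<in>V. form_in {u,v} (d-1) x"
    unfolding V_def using Pf by (auto intro!: form_in_sum form_in_smult)
  have Vc: "\<forall>x\<in>V. \<forall>y\<in>V. \<forall>e. x - mconst e * y \<in> V"
  proof (intro ballI allI)
    fix x y e assume "x \<in> V" "y \<in> V"
    then obtain c c' where "x = (\<Sum>i\<le>n. mconst (c i) * P i)" "y = (\<Sum>i\<le>n. mconst (c' i) * P i)"
      unfolding V_def by blast
    then have "x - mconst e * y = (\<Sum>i\<le>n. mconst (c i - e * c' i) * P i)"
      by (simp add: sum_distrib_left sum_subtractf mconst_diff mconst_mult algebra_simps)
    then show "x - mconst e * y \<in> V" unfolding V_def
      using rangeI[of "\<lambda>c. \<Sum>i\<le>n. mconst (c i) * P i" "\<lambda>i. c i - e * c' i"] by simp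
  qed
  define L where "L = low u v (d-1) ` (V - {0})"
  have Lsub: "L \<subseteq> {..d-1}"
    unfolding L_def using low_props[OF uv] Vf by fastforce
  then have finL: "finite L" by (rule finite_subset) simp
  have "\<forall>l\<in>L. \<exists>x. x \<in> V \<and> x \<noteq> 0 \<and> low u v (d-1) x = l"
    unfolding L_def by blast
  then obtain xl where xl: "\<forall>l\<in>L. xl l \<in> V \<and> xl l \<noteq> 0 \<and> low u v (d-1) (xl l) = l"
    by metis
  define X where "X = xl ` L"
  have VX: "V \<subseteq> mv.span X"
  proof (rule reduce_span[OF uv Vf])
    show "\<forall>x\<in>V. \<forall>y\<in>X. \<forall>c. x - mconst c * y \<in> V"
      using Vc xl unfolding X_def by blast
    show "\<forall>x\<in>V. x \<noteq> 0 \<longrightarrow> (\<exists>y\<in>X. y \<noteq> 0 \<and> form_in {u, v} (d - 1) y \<and> low u v (d - 1) y = low u v (d - 1) x)"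
    proof (intro ballI impI)
      fix x assume x: "x \<in> V" "x \<noteq> 0"
      then have l: "low u v (d-1) x \<in> L" unfolding L_def by blast
      then show "\<exists>y\<in>X. y \<noteq> 0 \<and> form_in {u, v} (d - 1) y \<and> low u v (d - 1) y = low u v (d - 1) x"
        using xl Vf unfolding X_def by (intro bexI[of _ "xl (low u v (d-1) x)"]) auto
    qed
  qed
  have PV: "P i \<in> V" if "i \<le> n" for i
  proof -
    have "(\<Sum>i'\<le>n. mconst (if i' = i then 1 else 0) * P i') = (\<Sum>i'\<le>n. if i' = i then P i' else 0)"
      by (rule sum.cong) auto
    also have "\<dots> = P i" using that by (simp add: sum.delta)
    finally show ?thesis unfolding V_def
      using rangeI[of "\<lambda>c. \<Sum>i\<le>n. mconst (c i) * P i" "\<lambda>i'. if i' = i then 1 else 0"] by simp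
  qed
  have injP: "inj_on P {..n}"
  proof (rule inj_onI, rule ccontr)
    fix i i' assume ii: "i \<in> {..n}" "i' \<in> {..n}" "P i = P i'" "i \<noteq> i'"
    define c where "c = (\<lambda>k. if k = i then (1::'a) else if k = i' then -1 else 0)"
    have "(\<Sum>k\<le>n. mconst (c k) * P k) = (\<Sum>k\<le>n. (if k = i then P k else 0) - (if k = i' then P k else 0))"
      by (rule sum.cong) (use ii in \<open>auto simp: c_def mconst_def single_uminus\<close>)
    also have "\<dots> = 0" using ii by (simp add: sum_subtractf sum.delta)
    finally have "c i = 0" using spec[OF indep, of c] ii by simp
    then show False by (simp add: c_def)
  qed
  have indP: "mv.independent (P ` {..n})"
  proof
    assume "mv.dependent (P ` {..n})"
    then obtain w where w: "\<exists>x\<in>P ` {..n}. w x \<noteq> 0" "(\<Sum>x\<in>P ` {..n}. mconst (w x) * x) = 0"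
      using mv.dependent_finite[of "P ` {..n}"] by auto
    have "(\<Sum>i\<le>n. mconst (w (P i)) * P i) = 0"
      using w(2) by (simp add: sum.reindex[OF injP])
    then have "\<forall>i\<le>n. w (P i) = 0" using spec[OF indep, of "\<lambda>i. w (P i)"] by simp
    with w(1) show False by auto
  qed
  have cardL: "n + 1 \<le> card L"
  proof -
    have "P ` {..n} \<subseteq> mv.span X" using PV VX by blast
    then have "card (P ` {..n}) \<le> card X"
      using mv.independent_span_bound[OF _ indP] finL unfolding X_def by blast
    also have "\<dots> \<le> card L" unfolding X_def by (rule card_image_le[OF finL])
    finally show ?thesis using card_image[OF injP] by simp
  qed
  have win: "\<exists>l\<in>L. s \<le> l \<and> l \<le> s + (j - 1)" if s: "s \<le> d - j" for s
  proof (rule ccontr)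
    assume "\<not> ?thesis"
    then have "L \<subseteq> {..d-1} - {s..s+(j-1)}" using Lsub by auto
    then have "card L \<le> card ({..d-1} - {s..s+(j-1)})" by (rule card_mono[rotated]) simp
    also have "\<dots> = d - j"
    proof -
      have "{s..s+(j-1)} \<subseteq> {..d-1}" using s j1 jd by auto
      then show ?thesis by (simp add: card_Diff_subset) (use j1 jd in linarith)
    qed
    finally show False using cardL jn by linarith
  qed
  have wexists: "\<exists>w. w \<in> mv.span G \<and> form_in {u,v} (d-j) w \<and> w \<noteq> 0 \<and> low u v (d-j) w = s"
    if s: "s \<le> d - j" for s
  proof -
    obtain l where l: "l \<in> L" "s \<le> l" "l \<le> s + (j-1)" using win[OF s] by blast
    define a where "a = l - s"
    have a: "a \<le> j - 1" "s + a = l" using l unfolding a_def by auto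
    define x where "x = xl l"
    have x: "x \<in> V" "x \<noteq> 0" "low u v (d-1) x = l" using xl l(1) unfolding x_def by auto
    obtain c where xc: "x = (\<Sum>i\<le>n. mconst (c i) * P i)" using x(1) unfolding V_def by blast
    define w where "w = sg (bm u v (j-1) a) 1 \<circ>\<^sub>D x"
    have wG: "w \<in> mv.span G"
    proof -
      have "w = (\<Sum>i\<le>n. mconst (c i) * (sg (bm u v (j-1) a) 1 \<circ>\<^sub>D P i))"
        unfolding w_def xc diff_sum_right diff_smult_right ..
      also have "\<dots> \<in> mv.span G"
        by (rule mv.span_sum, rule mv.span_scale, rule mv.span_base) (use a in \<open>auto simp: G_def\<close>)
      finally show ?thesis .
    qed
    have fx: "form_in {u,v} (d-1) x" using Vf x(1) by blast
    have fw: "form_in {u,v} (d-j) w"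
    proof -
      have "form_in {u,v} ((d-1) - (j-1)) w"
        unfolding w_def by (rule form_in_diff[OF form_bm fx]) (use a in simp)
      then show ?thesis using j1 by (simp add: diff_diff_add)
    qed
    have lw: "lk w (bm u v (d-j) s') = lk x (bm u v (d-1) (s'+a)) * rr (bm u v (d-j) s') (bm u v (j-1) a)"
      if "s' \<le> d - j" for s'
    proof -
      have "bm u v (d-j) s' + bm u v (j-1) a = bm u v (d-j + (j-1)) (s'+a)"
        by (rule bm_add[OF uv that a(1)])
      also have "d-j + (j-1) = d - 1" using j1 jd by linarith
      finally show ?thesis unfolding w_def single_diff_lookup by simp
    qed
    note lx = low_props[OF uv fx x(2)]
    have w1: "lk w (bm u v (d-j) s) \<noteq> 0"
      using lw[OF s] a(2) x(3) lx rr_nonzero by simp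
    have w2: "\<forall>s'<s. lk w (bm u v (d-j) s') = 0"
      using lw s a(2) x(3) lx by auto
    have "w \<noteq> 0" using w1 by auto
    moreover have "low u v (d-j) w = s" by (rule low_eqI[OF w1 w2])
    ultimately show ?thesis using wG fw by blast
  qed
  then have "\<forall>s\<in>{..d-j}. \<exists>w. w \<in> mv.span G \<and> form_in {u,v} (d-j) w \<and> w \<noteq> 0 \<and> low u v (d-j) w = s"
    by simp
  from bchoice[OF this] obtain ws where ws: "\<forall>s\<in>{..d-j}. ws s \<in> mv.span G \<and> form_in {u,v} (d-j) (ws s) \<and> ws s \<noteq> 0 \<and> low u v (d-j) (ws s) = s"
    by blast
  have "{t. form_in {u,v} (d-j) t} \<subseteq> mv.span (ws ` {..d-j})"
  proof (rule reduce_span[OF uv])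
    show "\<forall>x\<in>{t. form_in {u, v} (d - j) t}. form_in {u, v} (d - j) x" by simp
    show "\<forall>x\<in>{t. form_in {u, v} (d - j) t}. \<forall>y\<in>ws ` {..d - j}. \<forall>c. x - mconst c * y \<in> {t. form_in {u, v} (d - j) t}"
      using ws by (auto intro!: form_in_minus form_in_smult)
    show "\<forall>x\<in>{t. form_in {u, v} (d - j) t}. x \<noteq> 0 \<longrightarrow> (\<exists>y\<in>ws ` {..d - j}. y \<noteq> 0 \<and> form_in {u, v} (d - j) y \<and> low u v (d - j) y = low u v (d - j) x)"
    proof (intro ballI impI)
      fix x assume "x \<in> {t. form_in {u, v} (d - j) t}" "x \<noteq> 0"
      then have "low u v (d-j) x \<in> {..d-j}" using low_props[OF uv] by auto
      then show "\<exists>y\<in>ws ` {..d - j}. y \<noteq> 0 \<and> form_in {u, v} (d - j) y \<and> low u v (d - j) y = low u v (d - j) x"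
        using ws by blast
    qed
  qed
  also have "mv.span (ws ` {..d-j}) \<subseteq> mv.span G"
    by (rule mv.span_minimal) (use ws in auto)
  finally show ?thesis unfolding G_def by blast
qed

lemma low_mono: "low u v m (sg (bm u v m s) (1::'a::field_char_0)) = s" if "u \<noteq> v"
  by (rule low_eqI) (use that in \<open>auto simp: lookup_single when_def dest: bm_inj\<close>)

lemma form_in_span:
  assumes uv: "u \<noteq> v" and f: "form_in {u,v} k (p :: 'a::field_char_0 mpoly)"
  shows "p \<in> mv.span ((\<lambda>s. sg (bm u v k s) 1) ` {..k})"
proof -
  define V where "V = {t::'a mpoly. form_in {u,v} k t}"
  define X where "X = (\<lambda>s. sg (bm u v k s) (1::'a)) ` {..k}"
  have h1: "\<forall>x\<in>V. form_in {u, v} k x" by (simp add: V_def)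
  have h2: "\<forall>x\<in>V. \<forall>y\<in>X. \<forall>c. x - mconst c * y \<in> V"
  proof (intro ballI allI)
    fix x y c assume x: "x \<in> V" and y: "y \<in> X"
    then obtain s where s: "s \<le> k" "y = sg (bm u v k s) 1" by (auto simp: X_def)
    have "form_in {u,v} k (x - mconst c * y)"
      using x form_bm[OF s(1)] unfolding s(2) V_def by (intro form_in_minus form_in_smult) auto
    then show "x - mconst c * y \<in> V" by (simp add: V_def)
  qed
  have h3: "\<forall>x\<in>V. x \<noteq> 0 \<longrightarrow> (\<exists>y\<in>X. y \<noteq> 0 \<and> form_in {u, v} k y \<and> low u v k y = low u v k x)"
  proof (intro ballI impI)
    fix x assume "x \<in> V" "x \<noteq> 0"
    then have lk: "low u v k x \<le> k" using low_props[OF uv, of k x] by (simp add: V_def)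
    define y where "y = sg (bm u v k (low u v k x)) (1::'a)"
    have y1: "y \<in> X"
      unfolding y_def X_def using lk by (intro imageI) simp
    have y2: "y \<noteq> 0"
    proof
      assume "y = 0"
      then have "lk y (bm u v k (low u v k x)) = 0" by simp
      then show False by (simp add: y_def)
    qed
    have y3: "form_in {u, v} k y"
      unfolding y_def using lk by (rule form_bm)
    have y4: "low u v k y = low u v k x"
      unfolding y_def by (rule low_mono[OF uv])
    show "\<exists>y\<in>X. y \<noteq> 0 \<and> form_in {u, v} k y \<and> low u v k y = low u v k x"
      using y1 y2 y3 y4 by blast
  qed
  have "V \<subseteq> mv.span X" by (rule reduce_span[OF uv h1 h2 h3])
  then show ?thesis using f unfolding V_def X_def by blast
qed

lemma ker_exists:
  fixes l :: "'a::field_char_0 mpoly"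
  assumes uv: "u \<noteq> v" and fl: "form_in A 1 l" and m: "1 \<le> m"
  shows "\<exists>t. form_in {u,v} m t \<and> t \<noteq> 0 \<and> l \<circ>\<^sub>D t = 0"
proof -
  define F where "F s = l \<circ>\<^sub>D sg (bm u v m s) 1" for s
  define Y where "Y = (\<lambda>s. sg (bm u v (m-1) s) (1::'a)) ` {..m-1}"
  have FY: "F s \<in> mv.span Y" if "s \<le> m" for s
    unfolding F_def Y_def by (rule form_in_span[OF uv form_in_diff[OF fl form_bm[OF that]]])
  have lkm: "lk (sg (bm u v m s) (1::'a)) (bm u v m s') = (if s = s' then 1 else 0)" for s s'
    using bm_inj[OF uv] by (auto simp: lookup_single when_def)
  show ?thesis
  proof (cases "inj_on F {..m}")
    case False
    then obtain s1 s2 where s: "s1 \<le> m" "s2 \<le> m" "s1 \<noteq> s2" "F s1 = F s2"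
      unfolding inj_on_def by auto
    define t where "t = sg (bm u v m s1) (1::'a) - sg (bm u v m s2) 1"
    have "form_in {u,v} m t" unfolding t_def using s by (intro form_in_minus form_bm)
    moreover have "t \<noteq> 0"
    proof
      assume "t = 0"
      then have "lk t (bm u v m s1) = 0" by simp
      then show False using s(3) by (simp add: t_def lookup_minus lkm)
    qed
    moreover have "l \<circ>\<^sub>D t = 0" using s(4) by (simp add: t_def diff_minus_right F_def)
    ultimately show ?thesis by blast
  next
    case True
    have dep: "mv.dependent (F ` {..m})"
    proof (rule ccontr)
      assume ind: "mv.independent (F ` {..m})"
      have "F ` {..m} \<subseteq> mv.span Y" using FY by auto
      then have "card (F ` {..m}) \<le> card Y"
        using mv.independent_span_bound[OF _ ind] unfolding Y_def by blast
      also have "\<dots> \<le> card {..m-1}" unfolding Y_def by (rule card_image_le) simp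
      finally show False using card_image[OF True] m by simp
    qed
    then obtain w where w: "\<exists>x\<in>F ` {..m}. w x \<noteq> 0" "(\<Sum>x\<in>F ` {..m}. mconst (w x) * x) = 0"
      using mv.dependent_finite[of "F ` {..m}"] by auto
    have w0: "(\<Sum>s\<le>m. mconst (w (F s)) * F s) = 0"
      using w(2) by (simp add: sum.reindex[OF True])
    obtain s0 where s0: "s0 \<le> m" "w (F s0) \<noteq> 0" using w(1) by auto
    define t where "t = (\<Sum>s\<le>m. mconst (w (F s)) * sg (bm u v m s) 1)"
    have "form_in {u,v} m t" unfolding t_def by (intro form_in_sum form_in_smult form_bm) simp
    moreover have "t \<noteq> 0"
    proof
      assume "t = 0"
      then have "lk t (bm u v m s0) = 0" by simp
      moreover have "lk t (bm u v m s0) = (\<Sum>s\<le>m. if s = s0 then w (F s) else 0)"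
        unfolding t_def lookup_sum lookup_mconst_mult lkm by (rule sum.cong) auto
      ultimately show False using s0 by (simp add: sum.delta)
    qed
    moreover have "l \<circ>\<^sub>D t = 0"
      unfolding t_def diff_sum_right diff_smult_right using w0 by (simp add: F_def)
    ultimately show ?thesis by blast
  qed
qed

lemma lookup_single_mult: "lk (sg e 1 * p) (g + e) = lk (p::'a::field_char_0 mpoly) g"
proof (induction p rule: update_induct)
  case const then show ?case by simp
next
  case (update p k c)
  then show ?case
    by (simp add: update_eq_add distrib_left lookup_add mult_single lookup_single when_def
        lookup_update add.commute[of e])
qed

lemma var_diff_zero:
  assumes "\<forall>b\<in>ks h. i \<notin> ks b"
  shows "mvar i \<circ>\<^sub>D h = (0::'a::field_char_0 mpoly)"
proof (rule poly_mapping_eqI)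
  fix g
  have "g + sg i 1 \<notin> ks h" using assms by (auto simp: keys_add_nat)
  then show "lk (mvar i \<circ>\<^sub>D h) g = lk 0 g"
    unfolding mvar_def single_diff_lookup by (simp add: in_keys_iff)
qed

lemma rr_var: "i \<notin> ks g \<Longrightarrow> rr g (sg i 1) = 1"
  unfolding rr_def by (rule prod.neutral) (auto simp: lookup_add in_keys_iff lookup_single when_def)

lemma var_diff_var:
  assumes "\<forall>b\<in>ks p. i \<notin> ks b"
  shows "mvar i \<circ>\<^sub>D (mvar i * p) = (p::'a::field_char_0 mpoly)"
proof (rule poly_mapping_eqI)
  fix g
  have "lk p g * rr g (sg i 1) = (lk p g :: 'a)"
  proof (cases "g \<in> ks p")
    case True then show ?thesis using assms rr_var[of i g] by auto
  next
    case False then show ?thesis by (simp add: in_keys_iff)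
  qed
  then show "lk (mvar i \<circ>\<^sub>D (mvar i * p)) g = lk p g"
    unfolding mvar_def single_diff_lookup lookup_single_mult by simp
qed

lemma var_diff_other:
  assumes "\<forall>b\<in>ks p. i \<notin> ks b" "i' \<noteq> i"
  shows "mvar i \<circ>\<^sub>D (mvar i' * p) = (0::'a::field_char_0 mpoly)"
proof (rule var_diff_zero, intro ballI)
  fix b assume "b \<in> ks (mvar i' * p)"
  then obtain x y where "b = x + y" "x \<in> ks (mvar i' :: 'a mpoly)" "y \<in> ks p"
    using keys_mult by blast
  then show "i \<notin> ks b" using assms by (auto simp: mvar_def keys_add_nat)
qed

theorem corollary4p6:
  fixes f :: "'a::field_char_0 mpoly" and n d :: nat
  assumes "alg_closed_field TYPE('a)"
    and "n \<ge> 2" and "d \<ge> n + 1"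
    and "perazzo_form n d f"
    and "has_WLP n f"
  shows "d \<ge> 2 * n"
proof (rule ccontr)
  assume "\<not> d \<ge> 2 * n"
  then have dn: "d + 1 \<le> 2 * n" by linarith
  from assms(4) obtain P g where
    Pf: "\<forall>i\<le>n. form_in (uv_vars n) (d - 1) (P i)" and gf: "form_in (uv_vars n) d g"
    and indep: "\<forall>c. (\<Sum>i\<le>n. mconst (c i) * P i) = 0 \<longrightarrow> (\<forall>i\<le>n. c i = 0)"
    and fdef: "f = (\<Sum>i\<le>n. mvar i * P i) + g"
    unfolding perazzo_form_def by blast
  from assms(5) obtain l where fl: "form_in (all_vars n) 1 l"
    and wlp: "\<forall>i. mult_injective n f l i \<or> mult_surjective n f l i"
    unfolding has_WLP_def by blast
  define u where "u = n + 1"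
  define v where "v = n + 2"
  have uv: "u \<noteq> v" by (simp add: u_def v_def)
  have uvv: "uv_vars n = {u,v}" by (simp add: u_def v_def uv_vars_def)
  have Pf': "\<forall>i\<le>n. form_in {u,v} (d-1) (P i)" using Pf uvv by simp
  have notx: "\<forall>b\<in>ks (P i). i' \<notin> ks b" if "i' \<le> n" "i \<le> n" for i i'
    using Pf that unfolding form_in_def uv_vars_def by fastforce
  have notxg: "\<forall>b\<in>ks g. i' \<notin> ks b" if "i' \<le> n" for i'
    using gf that unfolding form_in_def uv_vars_def by fastforce
  have yf: "mvar i \<circ>\<^sub>D f = P i" if i: "i \<le> n" for i
  proof -
    have "mvar i \<circ>\<^sub>D f = (\<Sum>i'\<le>n. mvar i \<circ>\<^sub>D (mvar i' * P i')) + mvar i \<circ>\<^sub>D g"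
      by (simp add: fdef diff_add_right diff_sum_right)
    also have "(\<Sum>i'\<le>n. mvar i \<circ>\<^sub>D (mvar i' * P i')) = (\<Sum>i'\<le>n. if i' = i then P i' else 0)"
      by (rule sum.cong) (auto simp: var_diff_var var_diff_other notx i)
    also have "mvar i \<circ>\<^sub>D g = 0" by (rule var_diff_zero[OF notxg[OF i]])
    finally show ?thesis using i by (simp add: sum.delta)
  qed
  have allv: "{u,v} \<subseteq> all_vars n" by (auto simp: u_def v_def all_vars_def)
  have Gen: "\<forall>t. form_in {u,v} (d-j) t \<longrightarrow> (\<exists>\<theta>. form_in (all_vars n) j \<theta> \<and> \<theta> \<circ>\<^sub>D f = t)"
    if j: "1 \<le> j" "j < d" "d \<le> n + j" for j
  proof -
    define Im where "Im = {\<theta> \<circ>\<^sub>D f | \<theta>. form_in (all_vars n) j \<theta>}"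
    have sub: "mv.subspace Im"
      unfolding mv.subspace_def
    proof (intro conjI ballI allI)
      show "0 \<in> Im" unfolding Im_def
        by (rule CollectI, rule exI[of _ 0]) simp
      fix x y assume "x \<in> Im" "y \<in> Im"
      then obtain a b where "x = a \<circ>\<^sub>D f" "form_in (all_vars n) j a" "y = b \<circ>\<^sub>D f" "form_in (all_vars n) j b"
        unfolding Im_def by blast
      then show "x + y \<in> Im" unfolding Im_def
        by (intro CollectI exI[of _ "a + b"]) (simp add: diff_add_left form_in_add)
    next
      fix c x assume "x \<in> Im"
      then obtain a where "x = a \<circ>\<^sub>D f" "form_in (all_vars n) j a"
        unfolding Im_def by blast
      then show "mconst c * x \<in> Im" unfolding Im_def
        by (intro CollectI exI[of _ "mconst c * a"]) (simp add: diff_smult_left form_in_smult)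
    qed
    have GI: "{sg (bm u v (j-1) a) 1 \<circ>\<^sub>D P i | a i. a \<le> j-1 \<and> i \<le> n} \<subseteq> Im"
    proof
      fix x assume "x \<in> {sg (bm u v (j-1) a) 1 \<circ>\<^sub>D P i | a i. a \<le> j-1 \<and> i \<le> n}"
      then obtain a i where ai: "a \<le> j-1" "i \<le> n" "x = sg (bm u v (j-1) a) 1 \<circ>\<^sub>D P i" by blast
      define \<theta> :: "'a mpoly" where "\<theta> = sg (bm u v (j-1) a) 1 * mvar i"
      have "\<theta> \<circ>\<^sub>D f = x" unfolding \<theta>_def diff_assoc yf[OF ai(2)] ai(3) ..
      moreover have "form_in (all_vars n) j \<theta>"
      proof -
        have "form_in ({u,v} \<union> {i}) (j - 1 + 1) \<theta>"
          unfolding \<theta>_def mvar_def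
          by (rule form_in_mult[OF form_bm[OF ai(1)] form_in_single]) (auto simp: mon_deg_single)
        moreover have "{u,v} \<union> {i} \<subseteq> all_vars n" using allv ai(2) by (auto simp: all_vars_def)
        ultimately show ?thesis using j(1) by (auto intro: form_in_mono)
      qed
      ultimately show "x \<in> Im" unfolding Im_def by blast
    qed
    show ?thesis
    proof (intro allI impI)
      fix t :: "'a mpoly" assume "form_in {u,v} (d-j) t"
      then have "t \<in> mv.span {sg (bm u v (j-1) a) 1 \<circ>\<^sub>D P i | a i. a \<le> j-1 \<and> i \<le> n}"
        using window_surj[OF uv Pf' indep j] by blast
      then have "t \<in> Im" using mv.span_minimal[OF GI sub] by blast
      then show "\<exists>\<theta>. form_in (all_vars n) j \<theta> \<and> \<theta> \<circ>\<^sub>D f = t" unfolding Im_def by blast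
    qed
  qed
  define k where "k = d - n"
  have k: "1 \<le> k" "k < d" "k + 1 \<le> n" using assms(2,3) dn by (auto simp: k_def)
  obtain t where t: "form_in {u,v} n t" "t \<noteq> 0" "l \<circ>\<^sub>D t = 0"
    using ker_exists[OF uv fl, of n] assms(2) by auto
  obtain \<theta> where \<theta>: "form_in (all_vars n) k \<theta>" "\<theta> \<circ>\<^sub>D f = t"
  proof -
    have "d - k = n" using k by (simp add: k_def)
    then show ?thesis using Gen[of k] k t(1) that by (auto simp: k_def)
  qed
  have ninj: "\<not> mult_injective n f l k"
  proof
    assume "mult_injective n f l k"
    moreover have "l * \<theta> \<in> Ann n f"
      unfolding Ann_def
      using poly_in_mult[OF form_in_poly_in[OF fl] form_in_poly_in[OF \<theta>(1)]]
      by (simp add: diff_assoc \<theta>(2) t(3))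
    ultimately have "\<theta> \<in> Ann n f" using \<theta>(1) unfolding mult_injective_def by blast
    then show False using \<theta>(2) t(2) by (simp add: Ann_def)
  qed
  obtain t' where t': "form_in {u,v} (k+1) t'" "t' \<noteq> 0" "l \<circ>\<^sub>D t' = 0"
    using ker_exists[OF uv fl, of "k+1"] by auto
  obtain \<omega> where \<omega>: "form_in (all_vars n) (n-1) \<omega>" "\<omega> \<circ>\<^sub>D f = t'"
  proof -
    have "d - (n-1) = k + 1" using k assms(3) by (simp add: k_def)
    moreover have "1 \<le> n - 1" "n - 1 < d" "d \<le> n + (n - 1)" using assms(2,3) dn by auto
    ultimately show ?thesis using Gen[of "n-1"] t'(1) that by auto
  qed
  obtain g0 where g0: "g0 \<in> ks t'" using t'(2) keys_eq_empty by blast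
  define \<psi> where "\<psi> = sg g0 (1::'a)"
  have f\<psi>: "form_in (all_vars n) (k+1) \<psi>"
    unfolding \<psi>_def using t'(1) g0 allv unfolding form_in_def by auto
  have \<psi>t: "\<psi> \<circ>\<^sub>D t' \<noteq> 0"
  proof
    assume "\<psi> \<circ>\<^sub>D t' = 0"
    then have "lk (\<psi> \<circ>\<^sub>D t') 0 = 0" by simp
    then show False unfolding \<psi>_def single_diff_lookup using g0
      by (simp add: in_keys_iff rr_nonzero)
  qed
  have nsurj: "\<not> mult_surjective n f l k"
  proof
    assume "mult_surjective n f l k"
    then obtain \<theta>' where th: "form_in (all_vars n) k \<theta>'" "\<psi> - l * \<theta>' \<in> Ann n f"
      using f\<psi> unfolding mult_surjective_def by blast
    then have z: "(\<psi> - l * \<theta>') \<circ>\<^sub>D f = 0" by (simp add: Ann_def)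
    have "(\<omega> * (\<psi> - l * \<theta>')) \<circ>\<^sub>D f = 0" by (simp add: diff_assoc z)
    moreover have "\<omega> * (\<psi> - l * \<theta>') = \<psi> * \<omega> - \<theta>' * (l * \<omega>)" by (simp add: algebra_simps)
    moreover have "(\<theta>' * (l * \<omega>)) \<circ>\<^sub>D f = 0" by (simp add: diff_assoc \<omega>(2) t'(3))
    moreover have "(\<psi> * \<omega>) \<circ>\<^sub>D f = \<psi> \<circ>\<^sub>D t'" by (simp add: diff_assoc \<omega>(2))
    ultimately have "\<psi> \<circ>\<^sub>D t' = 0" by (simp add: diff_minus_left)
    with \<psi>t show False by simp
  qed
  from wlp ninj nsurj show False by blast
qed

end
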